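(* Let $X$ be a shift space over $\mathcal{A}_3=\{1,2,3\}$, let $\sigma\in\mathcal{S}_3$ be a morphism that is not left-invariant (resp. not right-invariant), and let $Y$ be the image of $X$ under $\sigma$. If $v\in\mathcal{L}(X)$ is a dendric bispecial factor, then every dendric extended image $u$ of $v$ satisfies $\mathcal{C}^-_Y(u)=\emptyset$ (resp. $\mathcal{C}^+_Y(u)=\emptyset$). In particular, if $X$ is dendric and $\sigma\in\mathrm{DP}(X)$, then $\mathcal{C}^-(Y)=\mathcal{C}^-_Y(\varepsilon)\ne\emptyset$ (resp. $\mathcal{C}^+(Y)=\mathcal{C}^+_Y(\varepsilon)\ne\emptyset$).
   Context: A shift space over $\mathcal{A}$ is a closed shift-invariant $X\subseteq\mathcal{A}^{\mathbb{Z}}$ in which all letters occur, with factor set $\mathcal{L}(X)$ ($\varepsilon$ the empty word). For $w\in\mathcal{L}(X)$, $\mathcal{E}_X(w)$ is the bipartite graph with left vertices $a^-$ ($aw\in\mathcal{L}(X)$), right vertices $b^+$ ($wb\in\mathcal{L}(X)$), edges $\{a^-,b^+\}$ ($awb\in\mathcal{L}(X)$); $w$ is bispecial if it has at least two left and two right vertices, dendric if $\mathcal{E}_X(w)$ is a tree; $X$ is dendric if all factors are. $\mathcal{C}^-_X(w)$ (resp. $\mathcal{C}^+_X(w)$): letters $a$ such that removing $a^-$ (resp. $a^+$) and resulting isolated vertices from $\mathcal{E}_X(w)$ leaves a disconnected graph; $\mathcal{C}^\pm(X)=\bigcup_{w\in\mathcal{L}(X)}\mathcal{C}^\pm_X(w)$.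 $\mathcal{S}_3=\{\alpha,\beta,\gamma,\eta\}\cup\{\delta^{(k)},\zeta^{(k)}:k\ge1\}$ with $\alpha:1\mapsto1,2\mapsto12,3\mapsto13$; $\beta:1\mapsto1,2\mapsto12,3\mapsto132$; $\gamma:1\mapsto1,2\mapsto12,3\mapsto123$; $\delta^{(k)}:1\mapsto1,2\mapsto123^k,3\mapsto123^{k+1}$; $\zeta^{(k)}:1\mapsto13^k,2\mapsto12,3\mapsto13^{k+1}$; $\eta:1\mapsto13,2\mapsto12,3\mapsto123$. For $\sigma\in\mathcal{S}_3$, $\mathcal{T}^-(\sigma)$ is the set of longest common suffixes of $\sigma(a_1),\sigma(a_2)$ and $\mathcal{T}^+(\sigma)$ the set of longest common prefixes of $\sigma(b_1),\sigma(b_2)$, over distinct letters; $\sigma$ is left-invariant (right-invariant) if $\mathcal{T}^-(\sigma)$ ($\mathcal{T}^+(\sigma)$) is a singleton. Image of $X$: $Y=\{S^k\sigma(x):x\in X,0\le k<|\sigma(x_0)|\}$. For non-empty $u\in\mathcal{L}(Y)$ containing $1$ there is a unique triple $(s,v,p)$, $v\in\mathcal{L}(X)$, $u=s\sigma(v)p$, with $s$ a proper suffix of $\sigma(a)$ and $p$ a non-empty prefix of $\sigma(b)$ for some $a,b$ with $avb\in\mathcal{L}(X)$; $u$ is an extended image of $v$. $\mathrm{DP}(X)$ is the set of $\sigma\in\mathcal{S}_3$ such that every bispecial extended image (in $Y$) of every $v\in\mathcal{L}(X)$ is dendric. *)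

theory Defs
  imports "HOL-Analysis.Analysis"
begin

text \<open>Points are bi-infinite sequences int => nat; the topology on int => nat is the
 product topology (Function_Topology) of the discrete topology on nat.\<close>

definition A3 :: "nat set" where "A3 = {1,2,3}"

definition shiftS :: "(int \<Rightarrow> nat) \<Rightarrow> (int \<Rightarrow> nat)" where
  "shiftS x = (\<lambda>i. x (i + 1))"

definition shift_space :: "(int \<Rightarrow> nat) set \<Rightarrow> bool" where
  "shift_space X \<longleftrightarrow>
     (\<forall>x\<in>X. \<forall>i. x i \<in> A3) \<and> closed X \<and> shiftS ` X = X \<and>
     (\<forall>a\<in>A3. \<exists>x\<in>X. \<exists>i. x i = a)"

text \<open>Factor set (language); contains the empty word.\<close>
definition lang :: "(int \<Rightarrow> nat) set \<Rightarrow> nat list set" where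
  "lang X = {w. \<exists>x\<in>X. \<exists>i::int. w = map (\<lambda>j. x (i + int j)) [0..<length w]}"

definition adj :: "'v set \<Rightarrow> ('v \<times> 'v) set \<Rightarrow> ('v \<times> 'v) set" where
  "adj V E = {(x,y). x \<in> V \<and> y \<in> V \<and> ((x,y) \<in> E \<or> (y,x) \<in> E)}"

definition connected_graph :: "'v set \<Rightarrow> ('v \<times> 'v) set \<Rightarrow> bool" where
  "connected_graph V E \<longleftrightarrow> (\<forall>u\<in>V. \<forall>v\<in>V. (u,v) \<in> (adj V E)\<^sup>*)"

text \<open>A graph is acyclic iff every edge is a bridge (its endpoints are not
 joined by a path avoiding it).  A tree is a connected acyclic graph.\<close>
definition acyclic_graph :: "'v set \<Rightarrow> ('v \<times> 'v) set \<Rightarrow> bool" where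
  "acyclic_graph V E \<longleftrightarrow>
     (\<forall>(x,y)\<in>E. x \<noteq> y \<and> (x,y) \<notin> (adj V (E - {(x,y),(y,x)}))\<^sup>*)"

definition is_tree :: "'v set \<Rightarrow> ('v \<times> 'v) set \<Rightarrow> bool" where
  "is_tree V E \<longleftrightarrow> connected_graph V E \<and> acyclic_graph V E"

definition left_ext :: "(int \<Rightarrow> nat) set \<Rightarrow> nat list \<Rightarrow> nat set" where
  "left_ext X w = {a. a # w \<in> lang X}"

definition right_ext :: "(int \<Rightarrow> nat) set \<Rightarrow> nat list \<Rightarrow> nat set" where
  "right_ext X w = {b. w @ [b] \<in> lang X}"

text \<open>Left vertices a^- are Inl a, right vertices b^+ are Inr b.\<close>
definition ext_vertices :: "(int \<Rightarrow> nat) set \<Rightarrow> nat list \<Rightarrow> (nat + nat) set" where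
  "ext_vertices X w = Inl ` left_ext X w \<union> Inr ` right_ext X w"

definition ext_edges :: "(int \<Rightarrow> nat) set \<Rightarrow> nat list \<Rightarrow> ((nat + nat) \<times> (nat + nat)) set" where
  "ext_edges X w = {(Inl a, Inr b) | a b. a # w @ [b] \<in> lang X}"

definition bispecial :: "(int \<Rightarrow> nat) set \<Rightarrow> nat list \<Rightarrow> bool" where
  "bispecial X w \<longleftrightarrow> w \<in> lang X \<and> card (left_ext X w) \<ge> 2 \<and> card (right_ext X w) \<ge> 2"

definition dendric :: "(int \<Rightarrow> nat) set \<Rightarrow> nat list \<Rightarrow> bool" where
  "dendric X w \<longleftrightarrow> is_tree (ext_vertices X w) (ext_edges X w)"

definition dendric_shift :: "(int \<Rightarrow> nat) set \<Rightarrow> bool" where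
  "dendric_shift X \<longleftrightarrow> (\<forall>w\<in>lang X. dendric X w)"

definition removed_edges :: "('v \<times> 'v) set \<Rightarrow> 'v \<Rightarrow> ('v \<times> 'v) set" where
  "removed_edges E z = {e \<in> E. fst e \<noteq> z \<and> snd e \<noteq> z}"

definition removed_vertices :: "'v set \<Rightarrow> ('v \<times> 'v) set \<Rightarrow> 'v \<Rightarrow> 'v set" where
  "removed_vertices V E z =
     {v \<in> V - {z}. \<exists>e\<in>removed_edges E z. fst e = v \<or> snd e = v}"

definition C_minus :: "(int \<Rightarrow> nat) set \<Rightarrow> nat list \<Rightarrow> nat set" where
  "C_minus X w = {a \<in> left_ext X w.
     \<not> connected_graph (removed_vertices (ext_vertices X w) (ext_edges X w) (Inl a))
                       (removed_edges (ext_edges X w) (Inl a))}"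

definition C_plus :: "(int \<Rightarrow> nat) set \<Rightarrow> nat list \<Rightarrow> nat set" where
  "C_plus X w = {b \<in> right_ext X w.
     \<not> connected_graph (removed_vertices (ext_vertices X w) (ext_edges X w) (Inr b))
                       (removed_edges (ext_edges X w) (Inr b))}"

definition C_minus_all :: "(int \<Rightarrow> nat) set \<Rightarrow> nat set" where
  "C_minus_all X = (\<Union>w\<in>lang X. C_minus X w)"

definition C_plus_all :: "(int \<Rightarrow> nat) set \<Rightarrow> nat set" where
  "C_plus_all X = (\<Union>w\<in>lang X. C_plus X w)"

type_synonym morph = "nat \<Rightarrow> nat list"

definition alpha :: morph where
  "alpha a = (if a = 1 then [1] else if a = 2 then [1,2] else if a = 3 then [1,3] else [])"
definition beta :: morph where
  "beta a = (if a = 1 then [1] else if a = 2 then [1,2] else if a = 3 then [1,3,2] else [])"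
definition gamma :: morph where
  "gamma a = (if a = 1 then [1] else if a = 2 then [1,2] else if a = 3 then [1,2,3] else [])"
definition delta :: "nat \<Rightarrow> morph" where
  "delta k a = (if a = 1 then [1] else if a = 2 then [1,2] @ replicate k 3
               else if a = 3 then [1,2] @ replicate (k+1) 3 else [])"
definition zeta :: "nat \<Rightarrow> morph" where
  "zeta k a = (if a = 1 then 1 # replicate k 3 else if a = 2 then [1,2]
              else if a = 3 then 1 # replicate (k+1) 3 else [])"
definition eta :: morph where
  "eta a = (if a = 1 then [1,3] else if a = 2 then [1,2] else if a = 3 then [1,2,3] else [])"

definition S3 :: "morph set" where
  "S3 = {alpha, beta, gamma, eta} \<union> {delta k | k. k \<ge> 1} \<union> {zeta k | k. k \<ge> 1}"

definition morph_word :: "morph \<Rightarrow> nat list \<Rightarrow> nat list" where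
  "morph_word \<sigma> w = concat (map \<sigma> w)"

fun lcp :: "nat list \<Rightarrow> nat list \<Rightarrow> nat list" where
  "lcp (x # xs) (y # ys) = (if x = y then x # lcp xs ys else [])"
| "lcp _ _ = []"

definition lcs :: "nat list \<Rightarrow> nat list \<Rightarrow> nat list" where
  "lcs u v = rev (lcp (rev u) (rev v))"

definition T_minus :: "morph \<Rightarrow> nat list set" where
  "T_minus \<sigma> = {lcs (\<sigma> a1) (\<sigma> a2) | a1 a2. a1 \<in> A3 \<and> a2 \<in> A3 \<and> a1 \<noteq> a2}"
definition T_plus :: "morph \<Rightarrow> nat list set" where
  "T_plus \<sigma> = {lcp (\<sigma> b1) (\<sigma> b2) | b1 b2. b1 \<in> A3 \<and> b2 \<in> A3 \<and> b1 \<noteq> b2}"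

definition left_invariant :: "morph \<Rightarrow> bool" where
  "left_invariant \<sigma> \<longleftrightarrow> (\<exists>t. T_minus \<sigma> = {t})"
definition right_invariant :: "morph \<Rightarrow> bool" where
  "right_invariant \<sigma> \<longleftrightarrow> (\<exists>t. T_plus \<sigma> = {t})"

text \<open>sigma(x): the sequence obtained by concatenating the sigma(x_n), with
 sigma(x_0) starting at position 0 (c n is the starting position of sigma(x_n)).\<close>
definition morph_seq :: "morph \<Rightarrow> (int \<Rightarrow> nat) \<Rightarrow> (int \<Rightarrow> nat)" where
  "morph_seq \<sigma> x = (THE y. \<exists>c :: int \<Rightarrow> int. c 0 = 0 \<and>
      (\<forall>n. c (n + 1) = c n + int (length (\<sigma> (x n)))) \<and>
      (\<forall>n j. j < length (\<sigma> (x n)) \<longrightarrow> y (c n + int j) = \<sigma> (x n) ! j))"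

definition image_shift :: "morph \<Rightarrow> (int \<Rightarrow> nat) set \<Rightarrow> (int \<Rightarrow> nat) set" where
  "image_shift \<sigma> X = {(shiftS ^^ k) (morph_seq \<sigma> x) | x k. x \<in> X \<and> k < length (\<sigma> (x 0))}"

text \<open>u is an extended image of v: u = s sigma(v) p with s a proper suffix of
 sigma(a), p a non-empty prefix of sigma(b), avb in L(X).\<close>
definition ext_image :: "morph \<Rightarrow> (int \<Rightarrow> nat) set \<Rightarrow> nat list \<Rightarrow> nat list \<Rightarrow> bool" where
  "ext_image \<sigma> X v u \<longleftrightarrow>
     v \<in> lang X \<and> u \<in> lang (image_shift \<sigma> X) \<and> u \<noteq> [] \<and> 1 \<in> set u \<and>
     (\<exists>s p a b. a # v @ [b] \<in> lang X \<and>
        (\<exists>t. t \<noteq> [] \<and> \<sigma> a = t @ s) \<and>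
        p \<noteq> [] \<and> (\<exists>t. \<sigma> b = p @ t) \<and>
        u = s @ morph_word \<sigma> v @ p)"

definition DP :: "(int \<Rightarrow> nat) set \<Rightarrow> morph set" where
  "DP X = {\<sigma> \<in> S3. \<forall>v\<in>lang X. \<forall>u. ext_image \<sigma> X v u \<and> bispecial (image_shift \<sigma> X) u
              \<longrightarrow> dendric (image_shift \<sigma> X) u}"

end

theory Submission
  imports Defs
begin


lemma map_upt_iff: "(w = map f [0..<length w]) \<longleftrightarrow> (\<forall>j<length w. w!j = f j)"
proof
  assume eq: "w = map f [0..<length w]"
  show "\<forall>j<length w. w!j = f j"
  proof (intro allI impI)
    fix j assume j: "j < length w"
    have "w ! j = map f [0..<length w] ! j" using arg_cong[OF eq, of "\<lambda>l. l!j"] .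
    also have "\<dots> = f j" using j by simp
    finally show "w!j = f j" .
  qed
next
  assume h: "\<forall>j<length w. w!j = f j"
  show "w = map f [0..<length w]"
    by (rule nth_equalityI) (use h in simp_all)
qed

lemma lang_iff: "w \<in> lang Z \<longleftrightarrow> (\<exists>z\<in>Z. \<exists>i. \<forall>j<length w. w!j = z (i + int j))"
proof -
  have "w \<in> lang Z \<longleftrightarrow> (\<exists>z\<in>Z. \<exists>i. w = map (\<lambda>j. z (i + int j)) [0..<length w])"
    unfolding lang_def by blast
  also have "\<dots> \<longleftrightarrow> (\<exists>z\<in>Z. \<exists>i. \<forall>j<length w. w!j = z (i + int j))"
    by (simp only: map_upt_iff)
  finally show ?thesis .
qed

lemma lang_prefix: "w @ w' \<in> lang Z \<Longrightarrow> w \<in> lang Z"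
proof -
  assume "w @ w' \<in> lang Z"
  then obtain z i where z: "z \<in> Z" and h: "\<forall>j<length (w@w'). (w@w')!j = z (i + int j)"
    unfolding lang_iff by blast
  have "\<forall>j<length w. w!j = z (i + int j)"
  proof (intro allI impI)
    fix j assume "j < length w"
    then show "w!j = z (i + int j)" using h[rule_format, of j] by (simp add: nth_append)
  qed
  then show ?thesis unfolding lang_iff using z by blast
qed

lemma lang_suffix: "w @ w' \<in> lang Z \<Longrightarrow> w' \<in> lang Z"
proof -
  assume "w @ w' \<in> lang Z"
  then obtain z i where z: "z \<in> Z" and h: "\<forall>j<length (w@w'). (w@w')!j = z (i + int j)"
    unfolding lang_iff by blast
  have "\<forall>j<length w'. w'!j = z ((i + int (length w)) + int j)"
  proof (intro allI impI)
    fix j assume "j < length w'"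
    then show "w'!j = z ((i + int (length w)) + int j)"
      using h[rule_format, of "length w + j"] by (simp add: nth_append add.assoc)
  qed
  then show ?thesis unfolding lang_iff using z by blast
qed

lemma all2: "(\<forall>j<Suc (Suc 0). P j) \<longleftrightarrow> P 0 \<and> P 1"
  by (auto simp: less_Suc_eq)

lemma lang2: "[a,b] \<in> lang Z \<longleftrightarrow> (\<exists>z\<in>Z. \<exists>i. z i = a \<and> z (i+1) = b)"
proof
  assume "[a,b] \<in> lang Z"
  then obtain z i where z: "z \<in> Z" and h: "\<forall>j<length [a,b]. [a,b]!j = z (i + int j)"
    unfolding lang_iff by blast
  have "z i = a" using h[rule_format, of 0] by simp
  moreover have "z (i+1) = b" using h[rule_format, of 1] by simp
  ultimately show "\<exists>z\<in>Z. \<exists>i. z i = a \<and> z (i+1) = b" using z by blast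
next
  assume "\<exists>z\<in>Z. \<exists>i. z i = a \<and> z (i+1) = b"
  then obtain z i where z: "z \<in> Z" "z i = a" "z (i+1) = b" by blast
  have "\<forall>j<length [a,b]. [a,b]!j = z (i + int j)"
  proof (intro allI impI)
    fix j assume "j < length [a,b]"
    then have "j = 0 \<or> j = 1" by auto
    then show "[a,b]!j = z (i + int j)" using z(2,3) by (elim disjE) simp_all
  qed
  then show "[a,b] \<in> lang Z" unfolding lang_iff using z(1) by blast
qed

lemma lang1: "[a] \<in> lang Z \<longleftrightarrow> (\<exists>b. [a,b] \<in> lang Z)"
proof
  assume "[a] \<in> lang Z"
  then obtain z i where z: "z \<in> Z" and h: "\<forall>j<length [a]. [a]!j = z (i + int j)"
    unfolding lang_iff by blast
  have "z i = a" using h[rule_format, of 0] by simp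
  then have "[a, z (i+1)] \<in> lang Z" unfolding lang2 using z by blast
  then show "\<exists>b. [a,b] \<in> lang Z" by blast
next
  assume "\<exists>b. [a,b] \<in> lang Z"
  then obtain b where "[a] @ [b] \<in> lang Z" by auto
  then show "[a] \<in> lang Z" by (rule lang_prefix)
qed

lemma lang1': "[b] \<in> lang Z \<longleftrightarrow> (\<exists>a. [a,b] \<in> lang Z)"
proof
  assume "[b] \<in> lang Z"
  then obtain z i where z: "z \<in> Z" and h: "\<forall>j<length [b]. [b]!j = z (i + int j)"
    unfolding lang_iff by blast
  have "z i = b" using h[rule_format, of 0] by simp
  then have "[z (i-1), b] \<in> lang Z" unfolding lang2 using z by (intro bexI[of _ z] exI[of _ "i-1"]) auto
  then show "\<exists>a. [a,b] \<in> lang Z" by blast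
next
  assume "\<exists>a. [a,b] \<in> lang Z"
  then obtain a where "[a] @ [b] \<in> lang Z" by auto
  then show "[b] \<in> lang Z" by (rule lang_suffix)
qed

fun cpos :: "(int \<Rightarrow> int) \<Rightarrow> nat \<Rightarrow> int" where
  "cpos L 0 = 0" | "cpos L (Suc m) = cpos L m + L (int m)"
fun cneg :: "(int \<Rightarrow> int) \<Rightarrow> nat \<Rightarrow> int" where
  "cneg L 0 = 0" | "cneg L (Suc m) = cneg L m + L (- int m - 1)"
definition cc :: "(int \<Rightarrow> int) \<Rightarrow> int \<Rightarrow> int" where
  "cc L n = (if n \<ge> 0 then cpos L (nat n) else - cneg L (nat (-n)))"

lemma cc0: "cc L 0 = 0" by (simp add: cc_def)

lemma cc_step: "cc L (n+1) = cc L n + L n"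
proof (cases "n \<ge> 0")
  case True
  then have "nat (n+1) = Suc (nat n)" by simp
  then show ?thesis using True by (simp add: cc_def)
next
  case False
  show ?thesis
  proof (cases "n = -1")
    case True then show ?thesis by (simp add: cc_def)
  next
    case F2: False
    define m where "m = nat (-n-1)"
    have a: "nat (-n) = Suc m" using False F2 m_def by simp
    have b: "nat (-(n+1)) = m" using m_def by simp
    have c: "- int m - 1 = n" using False m_def by simp
    show ?thesis using False F2 a b c by (simp add: cc_def)
  qed
qed

lemma c_cover:
  fixes c :: "int \<Rightarrow> int" and L :: "int \<Rightarrow> nat"
  assumes c0: "c 0 = 0" and cs: "\<forall>n. c (n+1) = c n + int (L n)" and pos: "\<forall>n. L n \<ge> 1"
  shows "\<exists>n j. j < L n \<and> m = c n + int j"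
proof -
  have "\<exists>n. c n \<le> m \<and> m < c (n+1)"
  proof (induct m rule: int_induct[where k=0])
    case base
    have "c (0+1) = c 0 + int (L 0)" using cs by blast
    moreover have "L 0 \<ge> 1" using pos by blast
    ultimately have "c 0 \<le> 0 \<and> 0 < c (0+1)" using c0 by linarith
    then show ?case by blast
  next
    case (step1 i) then obtain n where n: "c n \<le> i" "i < c (n+1)" by blast
    show ?case
    proof (cases "i+1 < c(n+1)")
      case True
      then have "c n \<le> i + 1 \<and> i + 1 < c (n+1)" using n by linarith
      thus ?thesis by blast
    next
      case False
      have "c (n+1+1) = c(n+1) + int (L (n+1))" using cs by blast
      moreover have "L (n+1) \<ge> 1" using pos by blast
      ultimately have "c (n+1) \<le> i + 1 \<and> i + 1 < c (n+1+1)" using n False by linarith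
      thus ?thesis by blast
    qed
  next
    case (step2 i) then obtain n where n: "c n \<le> i" "i < c (n+1)" by blast
    show ?case
    proof (cases "c n \<le> i - 1")
      case True
      then have "c n \<le> i - 1 \<and> i - 1 < c (n+1)" using n by linarith
      thus ?thesis by blast
    next
      case False
      have e: "c n = c (n-1) + int (L (n-1))" using cs[rule_format, of "n-1"] by simp
      moreover have "L (n-1) \<ge> 1" using pos by blast
      ultimately have "c (n-1) \<le> i - 1 \<and> i - 1 < c n" using n False by linarith
      moreover have "n - 1 + 1 = n" by simp
      ultimately have "c (n-1) \<le> i - 1 \<and> i - 1 < c (n-1+1)" by simp
      thus ?thesis by blast
    qed
  qed
  then obtain n where n: "c n \<le> m" "m < c(n+1)" by blast
  have "c (n+1) = c n + int (L n)" using cs by blast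
  then have "nat (m - c n) < L n \<and> m = c n + int (nat (m - c n))" using n by linarith
  then show ?thesis by blast
qed

lemma c_mono:
  fixes c :: "int \<Rightarrow> int" and L :: "int \<Rightarrow> nat"
  assumes cs: "\<forall>n. c (n+1) = c n + int (L n)" and lt: "n < n'"
  shows "c (n+1) \<le> c n'"
proof -
  have "n + 1 \<le> n'" using lt by simp
  then show ?thesis
  proof (induct n' rule: int_ge_induct)
    case base then show ?case by simp
  next
    case (step i) then show ?case using cs[rule_format, of i] by simp
  qed
qed

lemma c_inj:
  fixes c :: "int \<Rightarrow> int" and L :: "int \<Rightarrow> nat"
  assumes cs: "\<forall>n. c (n+1) = c n + int (L n)" and "j < L n" "j' < L n'" "c n + int j = c n' + int j'"
  shows "n = n' \<and> j = j'"
proof -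
  have "\<not> n < n'"
  proof
    assume "n < n'" then have "c (n+1) \<le> c n'" using c_mono[OF cs] by blast
    then show False using assms cs[rule_format, of n] by simp
  qed
  moreover have "\<not> n' < n"
  proof
    assume "n' < n" then have "c (n'+1) \<le> c n" using c_mono[OF cs] by blast
    then show False using assms cs[rule_format, of n'] by simp
  qed
  ultimately have "n = n'" by simp
  then show ?thesis using assms by simp
qed

lemma c_uniq:
  fixes c c' :: "int \<Rightarrow> int" and L :: "int \<Rightarrow> nat"
  assumes "c 0 = 0" "c' 0 = 0" "\<forall>n. c (n+1) = c n + int (L n)" "\<forall>n. c' (n+1) = c' n + int (L n)"
  shows "c = c'"
proof
  fix m show "c m = c' m"
  proof (induct m rule: int_induct[where k=0])
    case base then show ?case using assms by simp
  next
    case (step1 i) then show ?case using assms by simp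
  next
    case (step2 i)
    have "c (i-1+1) = c (i-1) + int (L (i-1))" "c' (i-1+1) = c' (i-1) + int (L (i-1))" using assms by blast+
    then show ?case using step2 by simp
  qed
qed

lemma morph_seq_prop:
  assumes ne: "\<forall>n. \<sigma> (x n) \<noteq> []"
  shows "\<exists>c. c 0 = 0 \<and> (\<forall>n. c (n+1) = c n + int (length (\<sigma> (x n)))) \<and>
     (\<forall>n j. j < length (\<sigma> (x n)) \<longrightarrow> morph_seq \<sigma> x (c n + int j) = \<sigma> (x n) ! j)"
proof -
  define L where "L n = length (\<sigma> (x n))" for n
  have pos: "\<forall>n. L n \<ge> 1" using ne by (simp add: L_def Suc_le_eq)
  define c0 where "c0 = cc (\<lambda>n. int (L n))"
  have c00: "c0 0 = 0" by (simp add: c0_def cc0)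
  have cs: "\<forall>n. c0 (n+1) = c0 n + int (L n)" by (simp add: c0_def cc_step)
  define Q where "Q y c \<longleftrightarrow> c 0 = 0 \<and> (\<forall>n. c (n+1) = c n + int (L n)) \<and>
     (\<forall>n j. j < L n \<longrightarrow> y (c n + int j) = \<sigma> (x n) ! j)" for y and c :: "int \<Rightarrow> int"
  define y0 where "y0 m = (let n = (SOME n. \<exists>j. j < L n \<and> m = c0 n + int j) in \<sigma> (x n) ! nat (m - c0 n))" for m
  have "Q y0 c0"
    unfolding Q_def
  proof (intro conjI c00 cs allI impI)
    fix n j assume j: "j < L n"
    let ?n = "SOME n'. \<exists>j'. j' < L n' \<and> c0 n + int j = c0 n' + int j'"
    have "\<exists>j'. j' < L ?n \<and> c0 n + int j = c0 ?n + int j'"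
      by (rule someI_ex) (use j in blast)
    then obtain j' where "j' < L ?n" "c0 n + int j = c0 ?n + int j'" by blast
    then have "n = ?n \<and> j = j'" using c_inj[OF cs j] by blast
    then show "y0 (c0 n + int j) = \<sigma> (x n) ! j" unfolding y0_def Let_def by (metis add_diff_cancel_left' nat_int)
  qed
  have uq: "y = y0" if "Q y c" for y c
  proof
    fix m
    have c: "c = c0" using c_uniq[of c c0 L] that c00 cs unfolding Q_def by blast
    obtain n j where "j < L n" "m = c0 n + int j" using c_cover[OF c00 cs pos] by blast
    then show "y m = y0 m" using that \<open>Q y0 c0\<close> c unfolding Q_def by simp
  qed
  have "\<exists>!y. \<exists>c. Q y c" using \<open>Q y0 c0\<close> uq by blast
  then have "\<exists>c. Q (THE y. \<exists>c. Q y c) c" by (rule theI')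
  moreover have "morph_seq \<sigma> x = (THE y. \<exists>c. Q y c)"
    unfolding morph_seq_def Q_def L_def by simp
  ultimately show ?thesis unfolding Q_def L_def by simp
qed

lemma S3_props: "\<sigma> \<in> S3 \<Longrightarrow> a \<in> A3 \<Longrightarrow> \<sigma> a \<noteq> [] \<and> \<sigma> a ! 0 = 1"
  by (auto simp: S3_def A3_def alpha_def beta_def gamma_def delta_def zeta_def eta_def)

lemma shiftS_pow: "(shiftS ^^ k) y i = y (i + int k)"
  by (induct k arbitrary: i) (simp_all add: shiftS_def ac_simps)

fun adjp :: "nat list \<Rightarrow> (nat \<times> nat) set" where
  "adjp (a # b # xs) = insert (a,b) (adjp (b # xs))" | "adjp _ = {}"

lemma adjp_nth: "j + 1 < length xs \<Longrightarrow> (xs!j, xs!(j+1)) \<in> adjp xs"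
proof (induct xs arbitrary: j rule: adjp.induct)
  case (1 a b xs) then show ?case by (cases j) auto
qed auto

lemma adjp_ex: "(p,q) \<in> adjp xs \<Longrightarrow> \<exists>j. j+1 < length xs \<and> p = xs!j \<and> q = xs!(j+1)"
proof (induct xs rule: adjp.induct)
  case (1 a b xs)
  show ?case
  proof (cases "(p,q) = (a,b)")
    case True then show ?thesis by (intro exI[of _ 0]) auto
  next
    case False then have "(p,q) \<in> adjp (b # xs)" using 1(2) by auto
    then obtain j where "j+1 < length (b#xs)" "p = (b#xs)!j" "q = (b#xs)!(j+1)" using 1(1) by blast
    then show ?thesis by (intro exI[of _ "Suc j"]) auto
  qed
qed auto

lemma adjp_rep: "adjp (a # replicate n a) = (if n = 0 then {} else {(a,a)})"
  by (induct n) auto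

definition P2 :: "morph \<Rightarrow> (nat \<times> nat) set" where
  "P2 \<sigma> = (\<Union>c\<in>A3. adjp (\<sigma> c)) \<union> (\<lambda>c. (last (\<sigma> c), 1)) ` A3"

lemma pairs_Y:
  assumes X: "shift_space X" and S: "\<sigma> \<in> S3"
  shows "[a,b] \<in> lang (image_shift \<sigma> X) \<longleftrightarrow> (a,b) \<in> P2 \<sigma>"
proof
  assume "[a,b] \<in> lang (image_shift \<sigma> X)"
  then obtain z i where z: "z \<in> image_shift \<sigma> X" "z i = a" "z (i+1) = b" unfolding lang2 by blast
  then obtain x k where x: "x \<in> X" "z = (shiftS ^^ k) (morph_seq \<sigma> x)" unfolding image_shift_def by blast
  have xA: "\<forall>n. x n \<in> A3" using X x unfolding shift_space_def by blast
  then have ne: "\<forall>n. \<sigma> (x n) \<noteq> []" using S3_props[OF S] by blast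
  obtain c where c0: "c 0 = 0" and cs: "\<forall>n. c (n+1) = c n + int (length (\<sigma> (x n)))"
    and cy: "\<forall>n j. j < length (\<sigma> (x n)) \<longrightarrow> morph_seq \<sigma> x (c n + int j) = \<sigma> (x n) ! j"
    using morph_seq_prop[OF ne] by blast
  define m where "m = i + int k"
  have ya: "morph_seq \<sigma> x m = a" and yb: "morph_seq \<sigma> x (m+1) = b"
    using z x by (auto simp: shiftS_pow m_def algebra_simps)
  have pos: "\<forall>n. length (\<sigma> (x n)) \<ge> 1" using ne by (simp add: Suc_le_eq)
  obtain n j where j: "j < length (\<sigma> (x n))" and mj: "m = c n + int j" using c_cover[OF c0 cs pos] by blast
  show "(a,b) \<in> P2 \<sigma>"
  proof (cases "j + 1 < length (\<sigma> (x n))")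
    case True
    have "a = \<sigma> (x n) ! j" using ya cy j mj by simp
    moreover have "b = \<sigma> (x n) ! (j+1)" using yb cy[rule_format, of "j+1" n] True mj by (simp add: ac_simps)
    ultimately have "(a,b) \<in> adjp (\<sigma> (x n))" using adjp_nth[OF True] by simp
    then show ?thesis using xA unfolding P2_def by blast
  next
    case False
    then have jl: "j = length (\<sigma> (x n)) - 1" using j by simp
    have "a = \<sigma> (x n) ! j" using ya cy j mj by simp
    then have "a = last (\<sigma> (x n))" using jl ne by (simp add: last_conv_nth)
    moreover have "m + 1 = c (n+1) + int 0" using cs mj jl j by auto
    then have "b = \<sigma> (x (n+1)) ! 0" using yb cy[rule_format, of 0 "n+1"] ne[rule_format, of "n+1"] by simp
    then have "b = 1" using S3_props[OF S] xA by blast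
    ultimately show ?thesis using xA unfolding P2_def by blast
  qed
next
  assume ab: "(a,b) \<in> P2 \<sigma>"
  have key: "\<exists>x\<in>X. \<exists>c i. (\<forall>n. x n \<in> A3) \<and> (\<forall>n. \<sigma> (x n) \<noteq> []) \<and> x i = d \<and> c (i+1) = c i + int (length (\<sigma> d)) \<and>
     (\<forall>n j. j < length (\<sigma> (x n)) \<longrightarrow> morph_seq \<sigma> x (c n + int j) = \<sigma> (x n) ! j)
     \<and> morph_seq \<sigma> x \<in> image_shift \<sigma> X" if d: "d \<in> A3" for d
  proof -
    obtain x i where x: "x \<in> X" "x i = d" using X d unfolding shift_space_def by blast
    have xA: "\<forall>n. x n \<in> A3" using X x unfolding shift_space_def by blast
    then have ne: "\<forall>n. \<sigma> (x n) \<noteq> []" using S3_props[OF S] by blast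
    obtain c where cs: "\<forall>n. c (n+1) = c n + int (length (\<sigma> (x n)))"
      and cy: "\<forall>n j. j < length (\<sigma> (x n)) \<longrightarrow> morph_seq \<sigma> x (c n + int j) = \<sigma> (x n) ! j"
      using morph_seq_prop[OF ne] by blast
    have "0 < length (\<sigma> (x 0))" using ne by simp
    then have "morph_seq \<sigma> x \<in> image_shift \<sigma> X" unfolding image_shift_def using x(1)
      by (intro CollectI exI[of _ x] exI[of _ 0]) simp
    then show ?thesis using x ne cs cy xA by blast
  qed
  from ab consider (inn) d where "d \<in> A3" "(a,b) \<in> adjp (\<sigma> d)" | (bd) d where "d \<in> A3" "a = last (\<sigma> d)" "b = 1"
    unfolding P2_def by blast
  then show "[a,b] \<in> lang (image_shift \<sigma> X)"
  proof cases
    case inn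
    obtain j where j: "j+1 < length (\<sigma> d)" "a = \<sigma> d ! j" "b = \<sigma> d ! (j+1)" using adjp_ex[OF inn(2)] by blast
    obtain x c i where x: "\<forall>n. x n \<in> A3" "\<forall>n. \<sigma> (x n) \<noteq> []" "x i = d"
      "\<forall>n j. j < length (\<sigma> (x n)) \<longrightarrow> morph_seq \<sigma> x (c n + int j) = \<sigma> (x n) ! j"
      "morph_seq \<sigma> x \<in> image_shift \<sigma> X" using key[OF inn(1)] by blast
    have "morph_seq \<sigma> x (c i + int j) = a" using x(3,4) j by simp
    moreover have "morph_seq \<sigma> x (c i + int (j+1)) = b" using x(3) x(4)[rule_format, of "j+1" i] j by simp
    ultimately show ?thesis unfolding lang2 using x(5) by (intro bexI[of _ "morph_seq \<sigma> x"] exI[of _ "c i + int j"]) (auto simp: ac_simps)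
  next
    case bd
    obtain x c i where x0: "\<forall>n. x n \<in> A3" and x: "\<forall>n. \<sigma> (x n) \<noteq> []" "x i = d" "c (i+1) = c i + int (length (\<sigma> d))"
      "\<forall>n j. j < length (\<sigma> (x n)) \<longrightarrow> morph_seq \<sigma> x (c n + int j) = \<sigma> (x n) ! j"
      "morph_seq \<sigma> x \<in> image_shift \<sigma> X" using key[OF bd(1)] by blast
    define l where "l = length (\<sigma> d) - 1"
    have "\<sigma> d \<noteq> []" using x(1,2) by metis
    then have l: "l < length (\<sigma> d)" "Suc l = length (\<sigma> d)" using l_def by auto
    have "morph_seq \<sigma> x (c i + int l) = \<sigma> d ! l" using x(2) x(4)[rule_format, of l i] l(1) by simp
    moreover have "a = \<sigma> d ! l" using bd(2) \<open>\<sigma> d \<noteq> []\<close> by (simp add: last_conv_nth l_def)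
    ultimately have ya: "morph_seq \<sigma> x (c i + int l) = a" by simp
    have e1: "c i + int l + 1 = c (i+1) + int 0" using x(3) l by simp
    have "0 < length (\<sigma> (x (i+1)))" using x(1) by simp
    then have "morph_seq \<sigma> x (c i + int l + 1) = \<sigma> (x (i+1)) ! 0" using e1 x(4)[rule_format, of 0 "i+1"] by simp
    moreover have "\<sigma> (x (i+1)) ! 0 = 1" using S3_props[OF S] x0 by blast
    ultimately have yb: "morph_seq \<sigma> x (c i + int l + 1) = b" using bd by simp
    from ya yb show ?thesis unfolding lang2 using x(5) by blast
  qed
qed



lemma adj_sym: "(p,q) \<in> adj V E \<Longrightarrow> (q,p) \<in> adj V E"
  unfolding adj_def by auto

lemma adj_conv: "(adj V E)\<inverse> = adj V E"
  using adj_sym by auto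

lemma not_conn:
  assumes uv: "u \<in> V" "v \<in> V" and S: "u \<in> S" "v \<notin> S" and cl: "\<forall>p q. p \<in> S \<longrightarrow> (p,q) \<in> E \<or> (q,p) \<in> E \<longrightarrow> q \<in> S"
  shows "\<not> connected_graph V E"
proof
  assume "connected_graph V E"
  then have "(u,v) \<in> (adj V E)\<^sup>*" using uv unfolding connected_graph_def by simp
  then have "v \<in> S"
  proof (induct rule: rtrancl_induct)
    case base show ?case using S by simp
  next
    case (step y z)
    have "(y,z) \<in> E \<or> (z,y) \<in> E" using step(2) unfolding adj_def by simp
    then show ?case using cl step(3) by blast
  qed
  then show False using S by simp
qed

lemma star_conn:
  assumes cen: "\<forall>e\<in>RE. fst e = c \<or> snd e = c" and cW: "RE \<noteq> {} \<Longrightarrow> c \<in> W"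
  shows "connected_graph {v\<in>W. \<exists>e\<in>RE. fst e = v \<or> snd e = v} RE"
proof -
  define V where "V = {v\<in>W. \<exists>e\<in>RE. fst e = v \<or> snd e = v}"
  have toc: "(u, c) \<in> (adj V RE)\<^sup>*" if u: "u \<in> V" for u
  proof -
    obtain e where e: "e \<in> RE" "fst e = u \<or> snd e = u" and uW: "u \<in> W" using u unfolding V_def by blast
    have cW': "c \<in> W" using cW e(1) by blast
    have ce: "fst e = c \<or> snd e = c" using cen e(1) by blast
    have cV: "c \<in> V" unfolding V_def using cW' ce e(1) by blast
    show ?thesis
    proof (cases "u = c")
      case True then show ?thesis by simp
    next
      case False
      obtain e1 e2 where ee: "e = (e1, e2)" by (cases e)
      have "(u,c) \<in> RE \<or> (c,u) \<in> RE" using e ce ee False by auto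
      then have "(u,c) \<in> adj V RE" using u cV unfolding adj_def by blast
      then show ?thesis by (rule r_into_rtrancl)
    qed
  qed
  have fromc: "(c, u) \<in> (adj V RE)\<^sup>*" if u: "u \<in> V" for u
  proof -
    have "(c, u) \<in> ((adj V RE)\<inverse>)\<^sup>*" using rtrancl_converseI[OF toc[OF u]] .
    then show ?thesis unfolding adj_conv .
  qed
  have "connected_graph V RE" unfolding connected_graph_def
  proof (intro ballI)
    fix u v assume "u \<in> V" "v \<in> V"
    then show "(u, v) \<in> (adj V RE)\<^sup>*" using rtrancl_trans[OF toc fromc] by blast
  qed
  then show ?thesis unfolding V_def .
qed

definition pbound :: "(nat \<times> nat) set \<Rightarrow> bool" where
  "pbound P \<longleftrightarrow> (\<forall>q. \<exists>p1 p2. \<forall>a. (a,q) \<in> P \<longrightarrow> a = p1 \<or> a = p2)"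
definition sbound :: "(nat \<times> nat) set \<Rightarrow> bool" where
  "sbound P \<longleftrightarrow> (\<forall>q. \<exists>p1 p2. \<forall>a. (q,a) \<in> P \<longrightarrow> a = p1 \<or> a = p2)"

lemma Cminus_empty:
  assumes P: "\<forall>a b. [a,b] \<in> lang Y \<longrightarrow> (a,b) \<in> P" and pb: "pbound P" and u: "u \<noteq> []"
  shows "C_minus Y u = {}"
proof -
  obtain p1 p2 where pp: "\<forall>a. (a, hd u) \<in> P \<longrightarrow> a = p1 \<or> a = p2" using pb unfolding pbound_def by blast
  have lp: "a = p1 \<or> a = p2" if "a # u \<in> lang Y" for a
  proof -
    have "a # u = [a, hd u] @ tl u" using u by simp
    then have "[a, hd u] \<in> lang Y" using that lang_prefix by metis
    then show ?thesis using P pp by blast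
  qed
  have "False" if a: "a \<in> C_minus Y u" for a
  proof -
    have aL: "a # u \<in> lang Y" and nc: "\<not> connected_graph (removed_vertices (ext_vertices Y u) (ext_edges Y u) (Inl a)) (removed_edges (ext_edges Y u) (Inl a))"
      using a unfolding C_minus_def left_ext_def by auto
    define b where "b = (if a = p1 then p2 else p1)"
    have ea: "a = p1 \<or> a = p2" using aL by (rule lp)
    have cen: "fst e = Inl b \<and> Inl b \<in> ext_vertices Y u - {Inl a}" if e0: "e \<in> removed_edges (ext_edges Y u) (Inl a)" for e
    proof -
      obtain a' b' where e: "e = (Inl a', Inr b')" "a' # u @ [b'] \<in> lang Y" "a' \<noteq> a"
        using e0 unfolding removed_edges_def ext_edges_def by auto
      have al: "a' # u \<in> lang Y" using e(2) lang_prefix[of "a' # u" "[b']"] by simp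
      then have "a' = p1 \<or> a' = p2" by (rule lp)
      then have "a' = b" using e(3) ea b_def by auto
      then show ?thesis using e al unfolding ext_vertices_def left_ext_def by auto
    qed
    have "connected_graph (removed_vertices (ext_vertices Y u) (ext_edges Y u) (Inl a)) (removed_edges (ext_edges Y u) (Inl a))"
      unfolding removed_vertices_def[of _ _ "Inl a"]
      by (rule star_conn[of _ "Inl b"]) (use cen in blast)+
    then show False using nc by blast
  qed
  then show ?thesis by blast
qed

lemma Cplus_empty:
  assumes P: "\<forall>a b. [a,b] \<in> lang Y \<longrightarrow> (a,b) \<in> P" and pb: "sbound P" and u: "u \<noteq> []"
  shows "C_plus Y u = {}"
proof -
  obtain p1 p2 where pp: "\<forall>a. (last u, a) \<in> P \<longrightarrow> a = p1 \<or> a = p2" using pb unfolding sbound_def by blast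
  have lp: "a = p1 \<or> a = p2" if "u @ [a] \<in> lang Y" for a
  proof -
    have "u @ [a] = butlast u @ [last u, a]" using u by simp
    then have "[last u, a] \<in> lang Y" using that lang_suffix by metis
    then show ?thesis using P pp by blast
  qed
  have "False" if a: "a \<in> C_plus Y u" for a
  proof -
    have aL: "u @ [a] \<in> lang Y" and nc: "\<not> connected_graph (removed_vertices (ext_vertices Y u) (ext_edges Y u) (Inr a)) (removed_edges (ext_edges Y u) (Inr a))"
      using a unfolding C_plus_def right_ext_def by auto
    define b where "b = (if a = p1 then p2 else p1)"
    have ea: "a = p1 \<or> a = p2" using aL by (rule lp)
    have cen: "snd e = Inr b \<and> Inr b \<in> ext_vertices Y u - {Inr a}" if e0: "e \<in> removed_edges (ext_edges Y u) (Inr a)" for e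
    proof -
      obtain a' b' where e: "e = (Inl a', Inr b')" "a' # u @ [b'] \<in> lang Y" "b' \<noteq> a"
        using e0 unfolding removed_edges_def ext_edges_def by auto
      have al: "u @ [b'] \<in> lang Y" using e(2) lang_suffix[of "[a']" "u @ [b']"] by simp
      then have "b' = p1 \<or> b' = p2" by (rule lp)
      then have "b' = b" using e(3) ea b_def by auto
      then show ?thesis using e al unfolding ext_vertices_def right_ext_def by auto
    qed
    have "connected_graph (removed_vertices (ext_vertices Y u) (ext_edges Y u) (Inr a)) (removed_edges (ext_edges Y u) (Inr a))"
      unfolding removed_vertices_def[of _ _ "Inr a"]
      by (rule star_conn[of _ "Inr b"]) (use cen in blast)+
    then show False using nc by blast
  qed
  then show ?thesis by blast
qed


lemma eps_graph:
  assumes P: "\<forall>a b. [a,b] \<in> lang Y \<longleftrightarrow> (a,b) \<in> P"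
  shows "left_ext Y [] = fst ` P" "right_ext Y [] = snd ` P"
    "ext_edges Y [] = {(Inl a, Inr b) | a b. (a,b) \<in> P}"
proof -
  show "left_ext Y [] = fst ` P" unfolding left_ext_def using P lang1 by force
  show "right_ext Y [] = snd ` P" unfolding right_ext_def using P lang1' by force
  show "ext_edges Y [] = {(Inl a, Inr b) | a b. (a,b) \<in> P}" unfolding ext_edges_def using P by simp
qed

lemma Cm_mem:
  assumes P: "\<forall>a b. [a,b] \<in> lang Y \<longleftrightarrow> (a,b) \<in> P"
    and h: "(a0, bz) \<in> P" "(uu, wu) \<in> P" "(vv, wv) \<in> P" "uu \<noteq> a0" "vv \<noteq> a0"
      "uu \<in> SL" "vv \<notin> SL" "\<forall>a b. (a,b) \<in> P \<longrightarrow> a \<noteq> a0 \<longrightarrow> (a \<in> SL \<longleftrightarrow> b \<in> SR)"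
  shows "a0 \<in> C_minus Y []"
proof -
  note g = eps_graph[OF P]
  let ?V = "ext_vertices Y []" and ?E = "ext_edges Y []"
  have V: "?V = Inl ` fst ` P \<union> Inr ` snd ` P" unfolding ext_vertices_def g by simp
  have "\<not> connected_graph (removed_vertices ?V ?E (Inl a0)) (removed_edges ?E (Inl a0))"
  proof (rule not_conn[where u="Inl uu" and v="Inl vv" and S="Inl ` SL \<union> Inr ` SR"])
    show "Inl uu \<in> removed_vertices ?V ?E (Inl a0)"
      unfolding removed_vertices_def removed_edges_def V g(3) using h
      by (auto intro!: bexI[of _ "(Inl uu, Inr wu)"] image_eqI[of _ _ "(uu,wu)"])
    show "Inl vv \<in> removed_vertices ?V ?E (Inl a0)"
      unfolding removed_vertices_def removed_edges_def V g(3) using h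
      by (auto intro!: bexI[of _ "(Inl vv, Inr wv)"] image_eqI[of _ _ "(vv,wv)"])
    show "Inl uu \<in> Inl ` SL \<union> Inr ` SR" using h by auto
    show "Inl vv \<notin> Inl ` SL \<union> Inr ` SR" using h by auto
    show "\<forall>p q. p \<in> Inl ` SL \<union> Inr ` SR \<longrightarrow> (p, q) \<in> removed_edges ?E (Inl a0) \<or> (q, p) \<in> removed_edges ?E (Inl a0) \<longrightarrow> q \<in> Inl ` SL \<union> Inr ` SR"
      unfolding removed_edges_def g(3) using h(8) by auto
  qed
  moreover have "a0 \<in> left_ext Y []" unfolding g using h by force
  ultimately show ?thesis unfolding C_minus_def by blast
qed

lemma Cp_mem:
  assumes P: "\<forall>a b. [a,b] \<in> lang Y \<longleftrightarrow> (a,b) \<in> P"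
    and h: "(az, b0) \<in> P" "(uu, wu) \<in> P" "(vv, wv) \<in> P" "wu \<noteq> b0" "wv \<noteq> b0"
      "uu \<in> SL" "vv \<notin> SL" "\<forall>a b. (a,b) \<in> P \<longrightarrow> b \<noteq> b0 \<longrightarrow> (a \<in> SL \<longleftrightarrow> b \<in> SR)"
  shows "b0 \<in> C_plus Y []"
proof -
  note g = eps_graph[OF P]
  let ?V = "ext_vertices Y []" and ?E = "ext_edges Y []"
  have V: "?V = Inl ` fst ` P \<union> Inr ` snd ` P" unfolding ext_vertices_def g by simp
  have "\<not> connected_graph (removed_vertices ?V ?E (Inr b0)) (removed_edges ?E (Inr b0))"
  proof (rule not_conn[where u="Inl uu" and v="Inl vv" and S="Inl ` SL \<union> Inr ` SR"])
    show "Inl uu \<in> removed_vertices ?V ?E (Inr b0)"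
      unfolding removed_vertices_def removed_edges_def V g(3) using h
      by (auto intro!: bexI[of _ "(Inl uu, Inr wu)"] image_eqI[of _ _ "(uu,wu)"])
    show "Inl vv \<in> removed_vertices ?V ?E (Inr b0)"
      unfolding removed_vertices_def removed_edges_def V g(3) using h
      by (auto intro!: bexI[of _ "(Inl vv, Inr wv)"] image_eqI[of _ _ "(vv,wv)"])
    show "Inl uu \<in> Inl ` SL \<union> Inr ` SR" using h by auto
    show "Inl vv \<notin> Inl ` SL \<union> Inr ` SR" using h by auto
    show "\<forall>p q. p \<in> Inl ` SL \<union> Inr ` SR \<longrightarrow> (p, q) \<in> removed_edges ?E (Inr b0) \<or> (q, p) \<in> removed_edges ?E (Inr b0) \<longrightarrow> q \<in> Inl ` SL \<union> Inr ` SR"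
      unfolding removed_edges_def g(3) using h(8) by auto
  qed
  moreover have "b0 \<in> right_ext Y []" unfolding g using h by force
  ultimately show ?thesis unfolding C_plus_def by blast
qed


lemma last_rep: "last (a # replicate n a) = a"
  by (induct n) auto

lemma P2_beta: "P2 beta = {(1,2),(1,3),(3,2),(1,1),(2,1)}"
  by (auto simp: P2_def A3_def beta_def)
lemma P2_gamma: "P2 gamma = {(1,2),(2,3),(1,1),(2,1),(3,1)}"
  by (auto simp: P2_def A3_def gamma_def)
lemma P2_eta: "P2 eta = {(1,3),(1,2),(2,3),(3,1),(2,1)}"
  by (auto simp: P2_def A3_def eta_def)
lemma P2_delta: "k \<ge> 1 \<Longrightarrow> P2 (delta k) = {(1,2),(2,3),(3,3),(1,1),(3,1)}"
proof -
  assume "k \<ge> 1" then obtain k' where k: "k = Suc k'" by (cases k) auto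
  have d2: "delta k 2 = 1 # 2 # 3 # replicate k' 3" and d3: "delta k 3 = 1 # 2 # 3 # replicate (Suc k') 3"
    and d1: "delta k 1 = [1]"
    by (simp_all add: delta_def k)
  show ?thesis unfolding P2_def A3_def using d1 d2 d3
    by (simp add: adjp_rep last_rep del: replicate_Suc) (auto simp add: adjp_rep)
qed
lemma P2_zeta: "k \<ge> 1 \<Longrightarrow> P2 (zeta k) = {(1,3),(3,3),(1,2),(3,1),(2,1)}"
proof -
  assume "k \<ge> 1" then obtain k' where k: "k = Suc k'" by (cases k) auto
  have d1: "zeta k 1 = 1 # 3 # replicate k' 3" and d3: "zeta k 3 = 1 # 3 # replicate (Suc k') 3"
    and d2: "zeta k 2 = [1,2]"
    by (simp_all add: zeta_def k)
  show ?thesis unfolding P2_def A3_def using d1 d2 d3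
    by (simp add: adjp_rep last_rep del: replicate_Suc) (auto simp add: adjp_rep)
qed


lemma li_alpha: "left_invariant alpha"
proof -
  have "T_minus alpha \<subseteq> {[]}"
    unfolding T_minus_def A3_def by (auto simp: alpha_def lcs_def)
  moreover have "lcs (alpha 1) (alpha 2) \<in> T_minus alpha" unfolding T_minus_def A3_def by (intro CollectI exI[of _ "1::nat"] exI[of _ "2::nat"]) simp
  moreover have "lcs (alpha 1) (alpha 2) = []" by (simp add: alpha_def lcs_def)
  ultimately have "T_minus alpha = {[]}" by auto
  then show ?thesis unfolding left_invariant_def by blast
qed
lemma li_gamma: "left_invariant gamma"
proof -
  have "T_minus gamma \<subseteq> {[]}"
    unfolding T_minus_def A3_def by (auto simp: gamma_def lcs_def)
  moreover have "lcs (gamma 1) (gamma 2) \<in> T_minus gamma" unfolding T_minus_def A3_def by (intro CollectI exI[of _ "1::nat"] exI[of _ "2::nat"]) simp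
  moreover have "lcs (gamma 1) (gamma 2) = []" by (simp add: gamma_def lcs_def)
  ultimately have "T_minus gamma = {[]}" by auto
  then show ?thesis unfolding left_invariant_def by blast
qed
lemma ri_alpha: "right_invariant alpha"
proof -
  have "T_plus alpha \<subseteq> {[1]}"
    unfolding T_plus_def A3_def by (auto simp: alpha_def)
  moreover have "lcp (alpha 1) (alpha 2) \<in> T_plus alpha" unfolding T_plus_def A3_def by (intro CollectI exI[of _ "1::nat"] exI[of _ "2::nat"]) simp
  moreover have "lcp (alpha 1) (alpha 2) = [1]" by (simp add: alpha_def)
  ultimately have "T_plus alpha = {[1]}" by auto
  then show ?thesis unfolding right_invariant_def by blast
qed
lemma ri_beta: "right_invariant beta"
proof -
  have "T_plus beta \<subseteq> {[1]}"
    unfolding T_plus_def A3_def by (auto simp: beta_def)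
  moreover have "lcp (beta 1) (beta 2) \<in> T_plus beta" unfolding T_plus_def A3_def by (intro CollectI exI[of _ "1::nat"] exI[of _ "2::nat"]) simp
  moreover have "lcp (beta 1) (beta 2) = [1]" by (simp add: beta_def)
  ultimately have "T_plus beta = {[1]}" by auto
  then show ?thesis unfolding right_invariant_def by blast
qed


lemma Cm_beta:
  assumes "\<forall>a b. [a,b] \<in> lang Y \<longleftrightarrow> (a,b) \<in> {(1,2),(1,3),(3,2),(1,1),(2,1)}"
  shows "C_minus Y [] \<noteq> {}"
proof -
  have "1 \<in> C_minus Y []"
    by (rule Cm_mem[where P="{(1,2),(1,3),(3,2),(1,1),(2,1)}" and bz=1 and uu=2 and wu=1 and vv=3 and wv=2 and SL="{2}" and SR="{1}"])
      (use assms in auto)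
  then show ?thesis by blast
qed

lemma pb_beta: "pbound {(1,2),(1,3),(3,2),(1,1),(2,1)}"
  unfolding pbound_def
proof (intro allI)
  fix q :: nat
  show "\<exists>p1 p2. \<forall>a. (a,q) \<in> {(1,2),(1,3),(3,2),(1,1),(2,1)} \<longrightarrow> a = p1 \<or> a = p2"
    by (intro exI[of _ "1"] exI[of _ "if q = 1 then 2 else 3"]) auto
qed

lemma Cm_delta:
  assumes "\<forall>a b. [a,b] \<in> lang Y \<longleftrightarrow> (a,b) \<in> {(1,2),(2,3),(3,3),(1,1),(3,1)}"
  shows "C_minus Y [] \<noteq> {}"
proof -
  have "3 \<in> C_minus Y []"
    by (rule Cm_mem[where P="{(1,2),(2,3),(3,3),(1,1),(3,1)}" and bz=1 and uu=2 and wu=3 and vv=1 and wv=2 and SL="{2}" and SR="{3}"])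
      (use assms in auto)
  then show ?thesis by blast
qed

lemma pb_delta: "pbound {(1,2),(2,3),(3,3),(1,1),(3,1)}"
  unfolding pbound_def
proof (intro allI)
  fix q :: nat
  show "\<exists>p1 p2. \<forall>a. (a,q) \<in> {(1,2),(2,3),(3,3),(1,1),(3,1)} \<longrightarrow> a = p1 \<or> a = p2"
    by (intro exI[of _ "if q = 3 then 2 else 1"] exI[of _ "3"]) auto
qed

lemma Cm_zeta:
  assumes "\<forall>a b. [a,b] \<in> lang Y \<longleftrightarrow> (a,b) \<in> {(1,3),(3,3),(1,2),(3,1),(2,1)}"
  shows "C_minus Y [] \<noteq> {}"
proof -
  have "3 \<in> C_minus Y []"
    by (rule Cm_mem[where P="{(1,3),(3,3),(1,2),(3,1),(2,1)}" and bz=3 and uu=2 and wu=1 and vv=1 and wv=3 and SL="{2}" and SR="{1}"])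
      (use assms in auto)
  then show ?thesis by blast
qed

lemma pb_zeta: "pbound {(1,3),(3,3),(1,2),(3,1),(2,1)}"
  unfolding pbound_def
proof (intro allI)
  fix q :: nat
  show "\<exists>p1 p2. \<forall>a. (a,q) \<in> {(1,3),(3,3),(1,2),(3,1),(2,1)} \<longrightarrow> a = p1 \<or> a = p2"
    by (intro exI[of _ "3"] exI[of _ "if q = 1 then 2 else 1"]) auto
qed

lemma Cm_eta:
  assumes "\<forall>a b. [a,b] \<in> lang Y \<longleftrightarrow> (a,b) \<in> {(1,3),(1,2),(2,3),(3,1),(2,1)}"
  shows "C_minus Y [] \<noteq> {}"
proof -
  have "2 \<in> C_minus Y []"
    by (rule Cm_mem[where P="{(1,3),(1,2),(2,3),(3,1),(2,1)}" and bz=3 and uu=3 and wu=1 and vv=1 and wv=3 and SL="{3}" and SR="{1}"])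
      (use assms in auto)
  then show ?thesis by blast
qed

lemma pb_eta: "pbound {(1,3),(1,2),(2,3),(3,1),(2,1)}"
  unfolding pbound_def
proof (intro allI)
  fix q :: nat
  show "\<exists>p1 p2. \<forall>a. (a,q) \<in> {(1,3),(1,2),(2,3),(3,1),(2,1)} \<longrightarrow> a = p1 \<or> a = p2"
    by (intro exI[of _ "if q = 1 then 3 else 1"] exI[of _ "2"]) auto
qed

lemma Cp_gamma:
  assumes "\<forall>a b. [a,b] \<in> lang Y \<longleftrightarrow> (a,b) \<in> {(1,2),(2,3),(1,1),(2,1),(3,1)}"
  shows "C_plus Y [] \<noteq> {}"
proof -
  have "1 \<in> C_plus Y []"
    by (rule Cp_mem[where P="{(1,2),(2,3),(1,1),(2,1),(3,1)}" and az=1 and uu=1 and wu=2 and vv=2 and wv=3 and SL="{1}" and SR="{2}"])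
      (use assms in auto)
  then show ?thesis by blast
qed

lemma sb_gamma: "sbound {(1,2),(2,3),(1,1),(2,1),(3,1)}"
  unfolding sbound_def
proof (intro allI)
  fix q :: nat
  show "\<exists>p1 p2. \<forall>a. (q,a) \<in> {(1,2),(2,3),(1,1),(2,1),(3,1)} \<longrightarrow> a = p1 \<or> a = p2"
    by (intro exI[of _ "1"] exI[of _ "if q = 1 then 2 else 3"]) auto
qed

lemma Cp_delta:
  assumes "\<forall>a b. [a,b] \<in> lang Y \<longleftrightarrow> (a,b) \<in> {(1,2),(2,3),(3,3),(1,1),(3,1)}"
  shows "C_plus Y [] \<noteq> {}"
proof -
  have "1 \<in> C_plus Y []"
    by (rule Cp_mem[where P="{(1,2),(2,3),(3,3),(1,1),(3,1)}" and az=1 and uu=1 and wu=2 and vv=2 and wv=3 and SL="{1}" and SR="{2}"])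
      (use assms in auto)
  then show ?thesis by blast
qed

lemma sb_delta: "sbound {(1,2),(2,3),(3,3),(1,1),(3,1)}"
  unfolding sbound_def
proof (intro allI)
  fix q :: nat
  show "\<exists>p1 p2. \<forall>a. (q,a) \<in> {(1,2),(2,3),(3,3),(1,1),(3,1)} \<longrightarrow> a = p1 \<or> a = p2"
    by (intro exI[of _ "if q = 1 then 2 else 3"] exI[of _ "1"]) auto
qed

lemma Cp_zeta:
  assumes "\<forall>a b. [a,b] \<in> lang Y \<longleftrightarrow> (a,b) \<in> {(1,3),(3,3),(1,2),(3,1),(2,1)}"
  shows "C_plus Y [] \<noteq> {}"
proof -
  have "3 \<in> C_plus Y []"
    by (rule Cp_mem[where P="{(1,3),(3,3),(1,2),(3,1),(2,1)}" and az=1 and uu=1 and wu=2 and vv=2 and wv=1 and SL="{1}" and SR="{2}"])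
      (use assms in auto)
  then show ?thesis by blast
qed

lemma sb_zeta: "sbound {(1,3),(3,3),(1,2),(3,1),(2,1)}"
  unfolding sbound_def
proof (intro allI)
  fix q :: nat
  show "\<exists>p1 p2. \<forall>a. (q,a) \<in> {(1,3),(3,3),(1,2),(3,1),(2,1)} \<longrightarrow> a = p1 \<or> a = p2"
    by (intro exI[of _ "3"] exI[of _ "if q = 1 then 2 else 1"]) auto
qed

lemma Cp_eta:
  assumes "\<forall>a b. [a,b] \<in> lang Y \<longleftrightarrow> (a,b) \<in> {(1,3),(1,2),(2,3),(3,1),(2,1)}"
  shows "C_plus Y [] \<noteq> {}"
proof -
  have "3 \<in> C_plus Y []"
    by (rule Cp_mem[where P="{(1,3),(1,2),(2,3),(3,1),(2,1)}" and az=1 and uu=1 and wu=2 and vv=2 and wv=1 and SL="{1}" and SR="{2}"])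
      (use assms in auto)
  then show ?thesis by blast
qed

lemma sb_eta: "sbound {(1,3),(1,2),(2,3),(3,1),(2,1)}"
  unfolding sbound_def
proof (intro allI)
  fix q :: nat
  show "\<exists>p1 p2. \<forall>a. (q,a) \<in> {(1,3),(1,2),(2,3),(3,1),(2,1)} \<longrightarrow> a = p1 \<or> a = p2"
    by (intro exI[of _ "3"] exI[of _ "if q = 1 then 2 else 1"]) auto
qed

lemma left_part:
  assumes PY: "\<forall>a b. [a,b] \<in> lang (image_shift \<sigma> X) \<longleftrightarrow> (a,b) \<in> P" and pb: "pbound P"
    and ne: "C_minus (image_shift \<sigma> X) [] \<noteq> {}"
  shows "(\<forall>v\<in>lang X. dendric X v \<and> bispecial X v \<longrightarrow>
              (\<forall>u. ext_image \<sigma> X v u \<and> dendric (image_shift \<sigma> X) u \<longrightarrow>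
                   C_minus (image_shift \<sigma> X) u = {})) \<and>
           (dendric_shift X \<and> \<sigma> \<in> DP X \<longrightarrow>
              C_minus_all (image_shift \<sigma> X) = C_minus (image_shift \<sigma> X) [] \<and>
              C_minus (image_shift \<sigma> X) [] \<noteq> {})"
proof -
  let ?Y = "image_shift \<sigma> X"
  have emp: "C_minus ?Y u = {}" if "u \<noteq> []" for u
    using Cminus_empty[of ?Y P u] PY pb that by blast
  have e0: "[] \<in> lang ?Y"
  proof -
    from ne obtain a where "a \<in> C_minus ?Y []" by blast
    then have "[] @ [a] \<in> lang ?Y" unfolding C_minus_def left_ext_def by simp
    then show ?thesis by (rule lang_prefix)
  qed
  have all: "C_minus_all ?Y = C_minus ?Y []"
  proof (rule equalityI)
    show "C_minus_all ?Y \<subseteq> C_minus ?Y []" unfolding C_minus_all_def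
    proof
      fix x assume "x \<in> (\<Union>w\<in>lang ?Y. C_minus ?Y w)"
      then obtain w where "w \<in> lang ?Y" "x \<in> C_minus ?Y w" by blast
      then show "x \<in> C_minus ?Y []" using emp by (cases "w = []") auto
    qed
    show "C_minus ?Y [] \<subseteq> C_minus_all ?Y" unfolding C_minus_all_def using e0 by blast
  qed
  show ?thesis using emp all ne unfolding ext_image_def by blast
qed

lemma right_part:
  assumes PY: "\<forall>a b. [a,b] \<in> lang (image_shift \<sigma> X) \<longleftrightarrow> (a,b) \<in> P" and pb: "sbound P"
    and ne: "C_plus (image_shift \<sigma> X) [] \<noteq> {}"
  shows "(\<forall>v\<in>lang X. dendric X v \<and> bispecial X v \<longrightarrow>
              (\<forall>u. ext_image \<sigma> X v u \<and> dendric (image_shift \<sigma> X) u \<longrightarrow>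
                   C_plus (image_shift \<sigma> X) u = {})) \<and>
           (dendric_shift X \<and> \<sigma> \<in> DP X \<longrightarrow>
              C_plus_all (image_shift \<sigma> X) = C_plus (image_shift \<sigma> X) [] \<and>
              C_plus (image_shift \<sigma> X) [] \<noteq> {})"
proof -
  let ?Y = "image_shift \<sigma> X"
  have emp: "C_plus ?Y u = {}" if "u \<noteq> []" for u
    using Cplus_empty[of ?Y P u] PY pb that by blast
  have e0: "[] \<in> lang ?Y"
  proof -
    from ne obtain a where "a \<in> C_plus ?Y []" by blast
    then have "[] @ [a] \<in> lang ?Y" unfolding C_plus_def right_ext_def by simp
    then show ?thesis by (rule lang_prefix)
  qed
  have all: "C_plus_all ?Y = C_plus ?Y []"
  proof (rule equalityI)
    show "C_plus_all ?Y \<subseteq> C_plus ?Y []" unfolding C_plus_all_def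
    proof
      fix x assume "x \<in> (\<Union>w\<in>lang ?Y. C_plus ?Y w)"
      then obtain w where "w \<in> lang ?Y" "x \<in> C_plus ?Y w" by blast
      then show "x \<in> C_plus ?Y []" using emp by (cases "w = []") auto
    qed
    show "C_plus ?Y [] \<subseteq> C_plus_all ?Y" unfolding C_plus_all_def using e0 by blast
  qed
  show ?thesis using emp all ne unfolding ext_image_def by blast
qed

theorem lemma5p7:
  fixes X :: "(int \<Rightarrow> nat) set" and \<sigma> :: morph
  assumes "shift_space X" and "\<sigma> \<in> S3"
  shows "(\<not> left_invariant \<sigma> \<longrightarrow>
           (\<forall>v\<in>lang X. dendric X v \<and> bispecial X v \<longrightarrow>
              (\<forall>u. ext_image \<sigma> X v u \<and> dendric (image_shift \<sigma> X) u \<longrightarrow>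
                   C_minus (image_shift \<sigma> X) u = {})) \<and>
           (dendric_shift X \<and> \<sigma> \<in> DP X \<longrightarrow>
              C_minus_all (image_shift \<sigma> X) = C_minus (image_shift \<sigma> X) [] \<and>
              C_minus (image_shift \<sigma> X) [] \<noteq> {}))
       \<and> (\<not> right_invariant \<sigma> \<longrightarrow>
           (\<forall>v\<in>lang X. dendric X v \<and> bispecial X v \<longrightarrow>
              (\<forall>u. ext_image \<sigma> X v u \<and> dendric (image_shift \<sigma> X) u \<longrightarrow>
                   C_plus (image_shift \<sigma> X) u = {})) \<and>
           (dendric_shift X \<and> \<sigma> \<in> DP X \<longrightarrow>
              C_plus_all (image_shift \<sigma> X) = C_plus (image_shift \<sigma> X) [] \<and>
              C_plus (image_shift \<sigma> X) [] \<noteq> {}))"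
proof -
  have PY: "\<forall>a b. [a,b] \<in> lang (image_shift \<sigma> X) \<longleftrightarrow> (a,b) \<in> P2 \<sigma>"
    using pairs_Y[OF assms] by blast
  {
    assume nl: "\<not> left_invariant \<sigma>"
    have cases: "\<sigma> = beta \<or> \<sigma> = eta \<or> (\<exists>k\<ge>1. \<sigma> = delta k) \<or> (\<exists>k\<ge>1. \<sigma> = zeta k)"
      using assms(2) nl li_alpha li_gamma unfolding S3_def by blast
    have "pbound (P2 \<sigma>) \<and> C_minus (image_shift \<sigma> X) [] \<noteq> {}"
    proof -
      { assume s: "\<sigma> = beta"
        then have "P2 \<sigma> = {(1,2),(1,3),(3,2),(1,1),(2,1)}" using P2_beta by simp
        then have ?thesis using PY Cm_beta pb_beta by simp }
      moreover
      { assume s: "\<sigma> = eta"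
        then have "P2 \<sigma> = {(1,3),(1,2),(2,3),(3,1),(2,1)}" using P2_eta by simp
        then have ?thesis using PY Cm_eta pb_eta by simp }
      moreover
      { fix k assume "k \<ge> 1" "\<sigma> = delta k"
        then have "P2 \<sigma> = {(1,2),(2,3),(3,3),(1,1),(3,1)}" using P2_delta by simp
        then have ?thesis using PY Cm_delta pb_delta by simp }
      moreover
      { fix k assume "k \<ge> 1" "\<sigma> = zeta k"
        then have "P2 \<sigma> = {(1,3),(3,3),(1,2),(3,1),(2,1)}" using P2_zeta by simp
        then have ?thesis using PY Cm_zeta pb_zeta by simp }
      ultimately show ?thesis using cases by blast
    qed
  }
  note LL = this
  {
    assume nr: "\<not> right_invariant \<sigma>"
    have cases: "\<sigma> = gamma \<or> \<sigma> = eta \<or> (\<exists>k\<ge>1. \<sigma> = delta k) \<or> (\<exists>k\<ge>1. \<sigma> = zeta k)"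
      using assms(2) nr ri_alpha ri_beta unfolding S3_def by blast
    have "sbound (P2 \<sigma>) \<and> C_plus (image_shift \<sigma> X) [] \<noteq> {}"
    proof -
      { assume s: "\<sigma> = gamma"
        then have "P2 \<sigma> = {(1,2),(2,3),(1,1),(2,1),(3,1)}" using P2_gamma by simp
        then have ?thesis using PY Cp_gamma sb_gamma by simp }
      moreover
      { assume s: "\<sigma> = eta"
        then have "P2 \<sigma> = {(1,3),(1,2),(2,3),(3,1),(2,1)}" using P2_eta by simp
        then have ?thesis using PY Cp_eta sb_eta by simp }
      moreover
      { fix k assume "k \<ge> 1" "\<sigma> = delta k"
        then have "P2 \<sigma> = {(1,2),(2,3),(3,3),(1,1),(3,1)}" using P2_delta by simp
        then have ?thesis using PY Cp_delta sb_delta by simp }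
      moreover
      { fix k assume "k \<ge> 1" "\<sigma> = zeta k"
        then have "P2 \<sigma> = {(1,3),(3,3),(1,2),(3,1),(2,1)}" using P2_zeta by simp
        then have ?thesis using PY Cp_zeta sb_zeta by simp }
      ultimately show ?thesis using cases by blast
    qed
  }
  note RR = this
  show ?thesis using left_part[OF PY] right_part[OF PY] LL RR by blast
qed

end
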